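(* Let $p>2$ be a prime, $q=p^n$, $d$ a natural number with $(d,p)=1$, $\psi$ a nontrivial additive character of $\mathbb{F}_p$, and let $r,s>0$ be integers with $r+s<d$. Let $\alpha\in\mathbb{F}_{q^r}$ and $\beta\in\mathbb{F}_{q^s}$ be nonzero elements with monic minimal polynomials $g,h$ over $\mathbb{F}_q$ respectively. For a natural number $m$ let $A_m=\mathbb{F}_{q^{m/p}}$ if $p\mid m$ and $A_m=\{0\}$ if $p\nmid m$. Then, averaging over $f\in\mathcal{F}_d$ uniformly, the average of $\psi\left(\mathrm{Tr}_{\mathbb{F}_{q^r}/\mathbb{F}_p}f(\alpha)-\mathrm{Tr}_{\mathbb{F}_{q^s}/\mathbb{F}_p}f(\beta)\right)$ equals $1$ if either ($g=h$ and $p\deg g\mid r-s$) or ($\alpha\in A_r$ and $\beta\in A_s$), and equals $0$ otherwise; and the average of $\psi\left(\mathrm{Tr}_{\mathbb{F}_{q^r}/\mathbb{F}_p}f(\alpha)+\mathrm{Tr}_{\mathbb{F}_{q^s}/\mathbb{F}_p}f(\beta)\right)$ equals $1$ if either ($g=h$ and $p\deg g\mid r+s$) or ($\alpha\in A_r$ and $\beta\in A_s$), and equals $0$ otherwise.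
   Context: $\mathcal{F}_d$ denotes the set of polynomials $f=\sum_{i=0}^d a_ix^i\in\mathbb{F}_q[x]$ with $a_d\neq 0$ and $a_i=0$ for every $i\ge 0$ divisible by $p$. *)

theory Defs
  imports Complex_Main "HOL-Computational_Algebra.Polynomial"
begin

text \<open>All finite fields are realised inside one ambient finite field 'a of
characteristic p.  The subfield with Q elements (Q a power of p whose
field degree divides that of 'a) is the set of roots of x^Q - x.\<close>
definition ffield_set :: "nat \<Rightarrow> 'a::field set" where
  "ffield_set Q = {x. x ^ Q = x}"

definition tr_Fp :: "nat \<Rightarrow> nat \<Rightarrow> 'a::field \<Rightarrow> 'a" where
  "tr_Fp p k x = (\<Sum>i<k. x ^ (p ^ i))"

definition Fam :: "nat \<Rightarrow> nat \<Rightarrow> nat \<Rightarrow> 'a::field poly set" where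
  "Fam p q d = {f. degree f = d \<and> coeff f d \<noteq> 0 \<and>
       (\<forall>i. coeff f i \<in> ffield_set q) \<and> (\<forall>i. p dvd i \<longrightarrow> coeff f i = 0)}"

definition A_set :: "nat \<Rightarrow> nat \<Rightarrow> nat \<Rightarrow> 'a::field set" where
  "A_set p q m = (if p dvd m then ffield_set (q ^ (m div p)) else {0})"

definition is_min_poly :: "'a::field set \<Rightarrow> 'a \<Rightarrow> 'a poly \<Rightarrow> bool" where
  "is_min_poly S a g \<longleftrightarrow> g \<noteq> 0 \<and> lead_coeff g = 1 \<and> (\<forall>i. coeff g i \<in> S) \<and>
     poly g a = 0 \<and>
     (\<forall>h. h \<noteq> 0 \<and> (\<forall>i. coeff h i \<in> S) \<and> poly h a = 0 \<longrightarrow> degree g \<le> degree h)"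

definition nontriv_add_char :: "nat \<Rightarrow> ('a::field \<Rightarrow> complex) \<Rightarrow> bool" where
  "nontriv_add_char p \<psi> \<longleftrightarrow>
     (\<forall>x\<in>ffield_set p. \<forall>y\<in>ffield_set p. \<psi> (x + y) = \<psi> x * \<psi> y) \<and>
     (\<forall>x\<in>ffield_set p. \<psi> x \<noteq> 0) \<and>
     (\<exists>x\<in>ffield_set p. \<psi> x \<noteq> 1)"

end

theory Submission
  imports Defs "HOL-Computational_Algebra.Computational_Algebra" "HOL-Library.FuncSet"
begin

lemma of_nat_card_eq_0: "of_nat (card (UNIV::'a::{field,finite} set)) = (0::'a)"
proof -
  have "(\<Sum>x\<in>UNIV. x + 1) = (\<Sum>x\<in>UNIV. (x::'a))"
    by (rule sum.reindex_bij_witness[of _ "\<lambda>x. x - 1" "\<lambda>x. x + 1"]) auto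
  then show ?thesis by (simp add: sum.distrib)
qed

lemma char_eq:
  assumes "prime p" "card (UNIV::'a::{field,finite} set) = p^N"
  shows "CHAR('a) = p"
proof -
  have pos: "CHAR('a) > 0" by (rule finite_imp_CHAR_pos) simp
  have pr: "prime CHAR('a)" using prime_CHAR_semidom[OF pos] .
  have "CHAR('a) dvd p^N" by (metis assms(2) of_nat_card_eq_0 of_nat_eq_0_iff_char_dvd)
  then have "CHAR('a) dvd p" using pr prime_dvd_power by blast
  then show ?thesis using pr assms(1) by (simp add: primes_dvd_imp_eq)
qed

lemma fermat_ff: "(x::'a::{field,finite}) ^ card (UNIV :: 'a set) = x"
proof (cases "x = 0")
  case False
  have "x * (\<Prod>y\<in>UNIV-{0}. x * y) = x * x ^ (card (UNIV :: 'a set) - 1) * \<Prod>(UNIV-{0})"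
    by (simp add: prod.distrib mult_ac)
  also have "x * x ^ (card (UNIV :: 'a set) - 1) = x ^ Suc (card (UNIV :: 'a set) - 1)"
    by (subst power_Suc) auto
  also have "Suc (card (UNIV :: 'a set) - 1) = card (UNIV :: 'a set)"
    using finite_UNIV_card_ge_0[where ?'a = 'a] by simp
  also have "(\<Prod>y\<in>UNIV-{0}. x * y) = (\<Prod>y\<in>UNIV-{0}. y)"
    by (rule prod.reindex_bij_witness[of _ "\<lambda>y. y / x" "\<lambda>y. x * y"]) (use False in auto)
  finally show ?thesis
    by simp
qed (use finite_UNIV_card_ge_0[where ?'a = 'a] in auto)

lemma pow_fix_iter: "(x::'a::comm_semiring_1) ^ Q = x \<Longrightarrow> x ^ (Q ^ k) = x"
proof (induction k)
  case (Suc k)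
  have "x ^ (Q ^ Suc k) = (x ^ (Q ^ k)) ^ Q" by (metis power_Suc2 power_mult)
  then show ?case using Suc by simp
qed simp

lemma pow_pow_mult: "((x::'a::comm_semiring_1) ^ (Q ^ a)) ^ (Q ^ b) = x ^ (Q ^ (a + b))"
  by (simp add: power_mult power_add)

context
  fixes p :: nat
  assumes charp: "CHAR('a::field) = p" and pp: "prime p"
begin

lemma fd_add: "((x::'a) + y) ^ (p ^ k) = x ^ (p ^ k) + y ^ (p ^ k)"
  by (rule freshmans_dream') (use charp pp in auto)

lemma fd_sum: "(sum (f::'b \<Rightarrow> 'a) A) ^ (p ^ k) = (\<Sum>i\<in>A. f i ^ (p ^ k))"
  by (rule freshmans_dream_sum') (use charp pp in auto)

lemma fd_diff: "((x::'a) - y) ^ (p ^ k) = x ^ (p ^ k) - y ^ (p ^ k)"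
  using fd_add[of "x - y" y k] by (simp add: algebra_simps)

lemma fd_neg: "(-(x::'a)) ^ (p ^ k) = - (x ^ (p ^ k))"
  using fd_diff[of 0 x k] prime_gt_0_nat[OF pp] by (simp add: power_0_left)

lemma fd_inj: "(x::'a) ^ (p ^ k) = y ^ (p ^ k) \<Longrightarrow> x = y"
  using fd_diff[of x y k] by simp

lemma of_nat_eq0_p: "(of_nat m :: 'a) = 0 \<longleftrightarrow> p dvd m"
  using charp of_nat_eq_0_iff_char_dvd by blast

lemma of_int_eq0_p: "(of_int m :: 'a) = 0 \<longleftrightarrow> int p dvd m"
  using charp of_int_eq_0_iff_char_dvd by blast

lemma ffs_add: "x \<in> ffield_set (p^k) \<Longrightarrow> y \<in> ffield_set (p^k) \<Longrightarrow> (x::'a) + y \<in> ffield_set (p^k)"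
  by (simp add: ffield_set_def fd_add)
lemma ffs_diff: "x \<in> ffield_set (p^k) \<Longrightarrow> y \<in> ffield_set (p^k) \<Longrightarrow> (x::'a) - y \<in> ffield_set (p^k)"
  by (simp add: ffield_set_def fd_diff)
lemma ffs_neg: "x \<in> ffield_set (p^k) \<Longrightarrow> - (x::'a) \<in> ffield_set (p^k)"
  by (simp add: ffield_set_def fd_neg)
lemma ffs_sum: "(\<And>i. i \<in> A \<Longrightarrow> f i \<in> ffield_set (p^k)) \<Longrightarrow> sum (f::'b\<Rightarrow>'a) A \<in> ffield_set (p^k)"
  by (simp add: ffield_set_def fd_sum)
end

lemma ffs_mult: "x \<in> ffield_set Q \<Longrightarrow> y \<in> ffield_set Q \<Longrightarrow> (x::'a::field) * y \<in> ffield_set Q"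
  by (simp add: ffield_set_def power_mult_distrib)
lemma ffs_div: "x \<in> ffield_set Q \<Longrightarrow> y \<in> ffield_set Q \<Longrightarrow> (x::'a::field) / y \<in> ffield_set Q"
  by (simp add: ffield_set_def power_divide)
lemma ffs_pow: "x \<in> ffield_set Q \<Longrightarrow> (x::'a::field) ^ i \<in> ffield_set Q"
  by (simp add: ffield_set_def flip: power_mult) (metis mult.commute power_mult)
lemma ffs_0: "0 \<in> ffield_set Q \<longleftrightarrow> Q > 0"
  by (simp add: ffield_set_def power_0_left)
lemma ffs_1: "1 \<in> ffield_set Q"
  by (simp add: ffield_set_def)
lemma ffs_iter: "x \<in> ffield_set Q \<Longrightarrow> x \<in> ffield_set (Q ^ k)"
  by (simp add: ffield_set_def pow_fix_iter)

lemma sum_lessThan_add_split: "(\<Sum>j<a+b. f j) = (\<Sum>j<a. f j) + (\<Sum>j<b. f (a + j::nat))"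
  by (induction b) (auto simp: add_ac)

lemma psi0: assumes "nontriv_add_char p \<psi>" "p > 0" shows "\<psi> 0 = 1"
proof -
  have z: "(0::'a::field) \<in> ffield_set p" using assms(2) by (simp add: ffs_0)
  have "\<psi> 0 = \<psi> 0 * \<psi> 0" using assms(1) z unfolding nontriv_add_char_def by (metis add_0)
  moreover have "\<psi> 0 \<noteq> 0" using assms(1) z unfolding nontriv_add_char_def by blast
  ultimately show ?thesis by simp
qed

lemma roots_bound_tr:
  assumes "Q \<ge> 2" "m \<ge> 1"
  shows "card {x::'a::{field,finite}. (\<Sum>j<m. x ^ (Q ^ j)) = 0} \<le> Q ^ (m - 1)"
proof -
  define P :: "'a poly" where "P = (\<Sum>j<m. monom 1 (Q ^ j))"
  have ev: "poly P x = (\<Sum>j<m. x ^ (Q ^ j))" for x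
    by (simp add: P_def poly_sum poly_monom)
  have inj: "Q ^ i = Q ^ j \<longleftrightarrow> i = j" for i j using assms(1) by (simp add: power_inject_exp)
  have cP: "coeff P i = (\<Sum>j<m. if Q ^ j = i then 1 else 0)" for i
    by (simp add: P_def coeff_sum coeff_monom)
  have "coeff P (Q ^ (m - 1)) = 1"
  proof -
    have "coeff P (Q ^ (m - 1)) = (\<Sum>j<m. if j = m - 1 then 1 else 0)"
      unfolding cP by (intro sum.cong) (auto simp: inj)
    also have "\<dots> = 1" using assms(2) by simp
    finally show ?thesis .
  qed
  then have nz: "P \<noteq> 0" by auto
  have "degree P \<le> Q ^ (m - 1)"
  proof (rule degree_le, intro allI impI)
    fix i assume i: "Q ^ (m - 1) < i"
    have "Q ^ j \<noteq> i" if "j < m" for j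
    proof -
      have "Q ^ j \<le> Q ^ (m - 1)" using that assms by (intro power_increasing) auto
      then show ?thesis using i by auto
    qed
    then show "coeff P i = 0" unfolding cP by (intro sum.neutral) auto
  qed
  moreover have "card {x. poly P x = 0} \<le> degree P" by (rule card_poly_roots_bound[OF nz])
  ultimately show ?thesis unfolding ev by simp
qed

context
  fixes p :: nat
  assumes charp: "CHAR('a::field) = p" and pp: "prime p"
begin

lemma tr_add: "tr_Fp p k ((x::'a) + y) = tr_Fp p k x + tr_Fp p k y"
  by (simp add: tr_Fp_def fd_add[OF charp pp] sum.distrib)

lemma tr_scal: "c \<in> ffield_set p \<Longrightarrow> tr_Fp p k (c * (x::'a)) = c * tr_Fp p k x"
  by (simp add: tr_Fp_def power_mult_distrib sum_distrib_left pow_fix_iter ffield_set_def)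

lemma tr_0: "tr_Fp p k (0::'a) = 0"
  using prime_gt_0_nat[OF pp] by (simp add: tr_Fp_def power_0_left)

lemma tr_in_Fp:
  assumes "(x::'a) \<in> ffield_set (p ^ k)"
  shows "tr_Fp p k x \<in> ffield_set p"
proof -
  have "(tr_Fp p k x) ^ (p ^ 1) = (\<Sum>j<k. (x ^ (p ^ j)) ^ (p ^ 1))"
    unfolding tr_Fp_def by (rule fd_sum[OF charp pp])
  also have "\<dots> = (\<Sum>j<k. x ^ (p ^ Suc j))" by (simp add: power_mult[symmetric] mult.commute)
  also have "\<dots> = tr_Fp p k x"
  proof -
    have "(\<Sum>j<Suc k. x ^ (p ^ j)) = x ^ (p ^ 0) + (\<Sum>j<k. x ^ (p ^ Suc j))"
      by (rule sum.lessThan_Suc_shift)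
    moreover have "(\<Sum>j<Suc k. x ^ (p ^ j)) = (\<Sum>j<k. x ^ (p ^ j)) + x ^ (p ^ k)" by simp
    ultimately show ?thesis using assms by (simp add: tr_Fp_def ffield_set_def)
  qed
  finally show ?thesis by (simp add: ffield_set_def)
qed

lemma tr_split: "tr_Fp p (n * r) (y::'a) = tr_Fp p n (\<Sum>m<r. y ^ ((p ^ n) ^ m))"
proof (induction r)
  case 0 then show ?case using tr_0 by (simp add: tr_Fp_def)
next
  case (Suc r)
  have "tr_Fp p (n * Suc r) y = tr_Fp p (n * r) y + (\<Sum>j<n. y ^ (p ^ (n * r + j)))"
    unfolding tr_Fp_def by (simp add: sum_lessThan_add_split add.commute[of n])
  also have "(\<Sum>j<n. y ^ (p ^ (n * r + j))) = tr_Fp p n (y ^ ((p ^ n) ^ r))"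
    unfolding tr_Fp_def by (intro sum.cong) (simp_all add: power_add power_mult flip: power_mult)
  finally show ?case using Suc by (simp add: tr_add)
qed

end


context
  fixes p n N :: nat
  assumes charp: "CHAR('a::{field,finite}) = p" and pp: "prime p"
    and cardU: "card (UNIV :: 'a set) = p ^ N" and ndvd: "n dvd N" and npos: "n > 0"
begin

lemma card_Fq: "card (ffield_set (p ^ n) :: 'a set) \<ge> p ^ n"
proof -
  define Q where "Q = p ^ n"
  define m where "m = N div n"
  have p2: "p \<ge> 2" using pp by (simp add: prime_ge_2_nat)
  have "p ^ 1 \<le> p ^ n" using npos p2 by (intro power_increasing) auto
  then have Q2: "Q \<ge> 2" unfolding Q_def using p2 by simp
  have QmN: "Q ^ m = p ^ N" unfolding Q_def m_def using ndvd by (metis dvd_mult_div_cancel power_mult)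
  have Npos: "N > 0"
  proof (rule ccontr)
    assume "\<not> N > 0"
    then have "card (UNIV :: 'a set) = 1" using cardU by simp
    then obtain z :: 'a where "UNIV = {z}" using card_1_singletonE by blast
    then show False by (metis UNIV_I singletonD zero_neq_one)
  qed
  have m1: "m \<ge> 1" unfolding m_def using ndvd Npos npos
    by (auto elim!: dvdE)
  define \<phi> :: "'a \<Rightarrow> 'a" where "\<phi> x = x ^ Q - x" for x
  define R where "R = {y::'a. (\<Sum>j<m. y ^ (Q ^ j)) = 0}"
  have phiR: "\<phi> x \<in> R" for x
  proof -
    have "(\<phi> x) ^ (Q ^ j) = x ^ (Q ^ Suc j) - x ^ (Q ^ j)" for j
    proof -
      have "(\<phi> x) ^ (Q ^ j) = (x ^ Q) ^ (p ^ (n * j)) - x ^ (p ^ (n * j))"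
        unfolding \<phi>_def Q_def using fd_diff[OF charp pp, of "x ^ p ^ n" x "n * j"]
        by (simp add: power_mult)
      also have "\<dots> = x ^ (Q ^ Suc j) - x ^ (Q ^ j)"
        unfolding Q_def by (simp add: power_mult[symmetric] power_add[symmetric] mult.commute)
      finally show ?thesis .
    qed
    then have "(\<Sum>j<m. (\<phi> x) ^ (Q ^ j)) = (\<Sum>j<m. x ^ (Q ^ Suc j) - x ^ (Q ^ j))" by simp
    also have "\<dots> = x ^ (Q ^ m) - x ^ (Q ^ 0)" by (rule sum_lessThan_telescope)
    also have "\<dots> = 0" using fermat_ff[of x] cardU QmN by simp
    finally show ?thesis unfolding R_def by simp
  qed
  have cR: "card R \<le> Q ^ (m - 1)" unfolding R_def by (rule roots_bound_tr[OF Q2 m1])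
  have fib: "card {x. \<phi> x = y} \<le> card (ffield_set Q :: 'a set)" for y
  proof (cases "\<exists>x0. \<phi> x0 = y")
    case True
    then obtain x0 where x0: "\<phi> x0 = y" by blast
    have "{x. \<phi> x = y} \<subseteq> (\<lambda>c. x0 + c) ` ffield_set Q"
    proof
      fix x assume "x \<in> {x. \<phi> x = y}"
      then have "x ^ Q - x = x0 ^ Q - x0" using x0 by (simp add: \<phi>_def)
      then have h: "x ^ Q - x0 ^ Q = x - x0"
      proof -
        assume h0: "x ^ Q - x = x0 ^ Q - x0"
        have "x ^ Q - x0 ^ Q = (x ^ Q - x) - (x0 ^ Q - x0) + (x - x0)" by (simp add: algebra_simps)
        then show ?thesis using h0 by simp
      qed
      have "(x - x0) ^ Q = x - x0" unfolding Q_def using fd_diff[OF charp pp, of x x0 n] h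
        by (simp add: Q_def)
      then show "x \<in> (\<lambda>c. x0 + c) ` ffield_set Q"
        by (intro image_eqI[of _ _ "x - x0"]) (auto simp: ffield_set_def)
    qed
    then have "card {x. \<phi> x = y} \<le> card ((\<lambda>c. x0 + c) ` ffield_set Q)"
      by (intro card_mono) auto
    also have "\<dots> \<le> card (ffield_set Q :: 'a set)" by (rule card_image_le) simp
    finally show ?thesis .
  qed simp
  have "p ^ N = card (\<Union>y\<in>\<phi> ` UNIV. {x. \<phi> x = y})" using cardU
    by (metis (mono_tags, lifting) UNIV_eq_I UN_iff mem_Collect_eq rangeI)
  also have "\<dots> \<le> (\<Sum>y\<in>\<phi> ` UNIV. card {x. \<phi> x = y})" by (rule card_UN_le) simp
  also have "\<dots> \<le> (\<Sum>y\<in>\<phi> ` UNIV. card (ffield_set Q :: 'a set))" by (intro sum_mono fib)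
  also have "\<dots> = card (\<phi> ` UNIV) * card (ffield_set Q :: 'a set)" by simp
  also have "\<dots> \<le> Q ^ (m - 1) * card (ffield_set Q :: 'a set)"
  proof -
    have "card (\<phi> ` UNIV) \<le> card R" using phiR by (intro card_mono) auto
    then show ?thesis using cR by (intro mult_right_mono) auto
  qed
  finally have "Q ^ (m - 1) * Q \<le> Q ^ (m - 1) * card (ffield_set Q :: 'a set)"
    using QmN m1 by (metis One_nat_def Suc_pred less_eq_Suc_le power_Suc2 mult.commute)
  then show ?thesis unfolding Q_def[symmetric] using Q2 by simp
qed

lemma nondeg_tr: "\<exists>b\<in>ffield_set (p ^ n). tr_Fp p n (b::'a) \<noteq> 0"
proof (rule ccontr)
  assume "\<not> ?thesis"
  then have "ffield_set (p ^ n) \<subseteq> {x::'a. (\<Sum>j<n. x ^ (p ^ j)) = 0}"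
    by (auto simp: tr_Fp_def)
  then have "card (ffield_set (p ^ n) :: 'a set) \<le> card {x::'a. (\<Sum>j<n. x ^ (p ^ j)) = 0}"
    by (intro card_mono) auto
  also have "\<dots> \<le> p ^ (n - 1)" using npos pp by (intro roots_bound_tr) (auto simp: prime_ge_2_nat)
  also have "\<dots> < p ^ n" using npos prime_gt_1_nat[OF pp] by (intro power_strict_increasing) auto
  finally show False using card_Fq by simp
qed

lemma charsum:
  assumes psi: "nontriv_add_char p \<psi>" and u: "(u::'a) \<in> ffield_set (p ^ n)"
  shows "(\<Sum>a\<in>ffield_set (p ^ n). \<psi> (tr_Fp p n (a * u))) =
           (if u = 0 then of_nat (card (ffield_set (p ^ n) :: 'a set)) else 0)"
proof (cases "u = 0")
  case True
  then show ?thesis using psi0[OF psi] pp by (simp add: tr_0[OF charp pp] prime_gt_0_nat)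
next
  case False
  define Fq where "Fq = (ffield_set (p ^ n) :: 'a set)"
  define S where "S = (\<Sum>a\<in>Fq. \<psi> (tr_Fp p n (a * u)))"
  obtain b where b: "b \<in> Fq" "tr_Fp p n b \<noteq> 0" using nondeg_tr unfolding Fq_def by blast
  define a0 where "a0 = b / u"
  have a0: "a0 \<in> Fq" "tr_Fp p n (a0 * u) \<noteq> 0"
    using b u False unfolding a0_def Fq_def by (auto intro: ffs_div)
  define t0 where "t0 = tr_Fp p n (a0 * u)"
  have t0: "t0 \<in> ffield_set p" unfolding t0_def
    by (rule tr_in_Fp[OF charp pp]) (use a0 u in \<open>auto intro: ffs_mult simp: Fq_def\<close>)
  obtain x where x: "x \<in> ffield_set p" "\<psi> x \<noteq> 1" using psi unfolding nontriv_add_char_def by blast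
  define c where "c = x / t0"
  have c: "c \<in> ffield_set p" unfolding c_def using x(1) t0 by (rule ffs_div)
  define a1 where "a1 = c * a0"
  have a1: "a1 \<in> Fq" unfolding a1_def Fq_def
    by (rule ffs_mult) (use c ffs_iter[of c p n] a0 in \<open>auto simp: Fq_def\<close>)
  have ta1: "tr_Fp p n (a1 * u) = x"
    unfolding a1_def using tr_scal[OF charp pp c, of n "a0 * u"] a0(2) unfolding c_def t0_def[symmetric]
    by (simp add: mult.assoc t0_def)
  have "S = (\<Sum>a\<in>Fq. \<psi> (tr_Fp p n ((a + a1) * u)))"
    unfolding S_def
    by (rule sum.reindex_bij_witness[of _ "\<lambda>a. a + a1" "\<lambda>a. a - a1"])
       (use a1 in \<open>auto simp: Fq_def intro: ffs_add[OF charp pp] ffs_diff[OF charp pp]\<close>)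
  also have "\<dots> = (\<Sum>a\<in>Fq. \<psi> (tr_Fp p n (a * u)) * \<psi> x)"
  proof (intro sum.cong refl)
    fix a assume a: "a \<in> Fq"
    have ta: "tr_Fp p n (a * u) \<in> ffield_set p"
      by (rule tr_in_Fp[OF charp pp]) (use a u in \<open>auto intro: ffs_mult simp: Fq_def\<close>)
    have "tr_Fp p n ((a + a1) * u) = tr_Fp p n (a * u) + x"
      by (simp add: distrib_right tr_add[OF charp pp] ta1)
    then show "\<psi> (tr_Fp p n ((a + a1) * u)) = \<psi> (tr_Fp p n (a * u)) * \<psi> x"
      using psi ta x(1) unfolding nontriv_add_char_def by simp
  qed
  also have "\<dots> = S * \<psi> x" unfolding S_def by (simp add: sum_distrib_right)
  finally have "S * (1 - \<psi> x) = 0" by (simp add: algebra_simps)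
  then have "S = 0" using x(2) by simp
  then show ?thesis using False by (simp add: S_def Fq_def)
qed

end

definition per :: "nat \<Rightarrow> 'a::field \<Rightarrow> nat" where
  "per Q x = (LEAST k. k > 0 \<and> x ^ (Q ^ k) = x)"

definition orb :: "nat \<Rightarrow> 'a::field \<Rightarrow> 'a set" where
  "orb Q x = (\<lambda>j. x ^ (Q ^ j)) ` {..<per Q x}"

lemma per_props:
  assumes "t > 0" "(x::'a::field) ^ (Q ^ t) = x"
  shows "per Q x > 0" "x ^ (Q ^ per Q x) = x" "per Q x \<le> t"
proof -
  have ex: "t > 0 \<and> x ^ (Q ^ t) = x" using assms by simp
  show "per Q x > 0" "x ^ (Q ^ per Q x) = x" unfolding per_def using LeastI[of "\<lambda>k. k > 0 \<and> x ^ (Q ^ k) = x" t, OF ex] by auto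
  show "per Q x \<le> t" unfolding per_def by (rule Least_le) (use ex in simp)
qed

lemma pow_mod:
  assumes "(x::'a::field) ^ (Q ^ k) = x"
  shows "x ^ (Q ^ j) = x ^ (Q ^ (j mod k))"
proof -
  have "x ^ (Q ^ (k * (j div k))) = x"
    using pow_fix_iter[of x "Q ^ k" "j div k"] assms by (simp add: power_mult)
  then have "x ^ (Q ^ (k * (j div k) + j mod k)) = x ^ (Q ^ (j mod k))"
    by (metis pow_pow_mult)
  then show ?thesis by simp
qed

lemma per_dvd:
  assumes "t > 0" "(x::'a::field) ^ (Q ^ t) = x" "x ^ (Q ^ j) = x"
  shows "per Q x dvd j"
proof (rule ccontr)
  assume nd: "\<not> per Q x dvd j"
  define k where "k = per Q x"
  have k: "k > 0" "x ^ (Q ^ k) = x" using per_props[OF assms(1,2)] by (auto simp: k_def)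
  have jm: "j mod k > 0" "j mod k < k" using nd k(1) by (auto simp: k_def dvd_eq_mod_eq_0)
  have xx: "x ^ (Q ^ (j mod k)) = x" using pow_mod[OF k(2), of j] assms(3) by simp
  have "per Q x \<le> j mod k" unfolding per_def by (rule Least_le) (use jm xx in simp)
  then have "k \<le> j mod k" by (simp add: k_def)
  then show False using jm by simp
qed

lemma orb_all:
  assumes "t > 0" "(x::'a::field) ^ (Q ^ t) = x"
  shows "x ^ (Q ^ j) \<in> orb Q x"
  using per_props[OF assms] pow_mod[of x Q "per Q x" j] unfolding orb_def
  by (intro image_eqI[of _ _ "j mod per Q x"]) auto

lemma orb_self:
  assumes "t > 0" "(x::'a::field) ^ (Q ^ t) = x"
  shows "x \<in> orb Q x"
  using orb_all[OF assms, of 0] by simp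

lemma orb_iff:
  assumes "t > 0" "(x::'a::field) ^ (Q ^ t) = x"
  shows "y \<in> orb Q x \<longleftrightarrow> (\<exists>j. y = x ^ (Q ^ j))"
  using orb_all[OF assms] unfolding orb_def by auto

context
  fixes p n :: nat
  assumes charp: "CHAR('a::{field,finite}) = p" and pp: "prime p" and npos: "n > 0"
begin

lemma frob_inj: "(x::'a) ^ ((p ^ n) ^ j) = y ^ ((p ^ n) ^ j) \<Longrightarrow> x = y"
  by (rule fd_inj[OF charp pp, of _ "n * j"]) (simp add: power_mult)

lemma orb_inj:
  assumes "t > 0" "(x::'a) ^ ((p^n) ^ t) = x"
  shows "inj_on (\<lambda>j. x ^ ((p^n) ^ j)) {..<per (p^n) x}"
proof -
  define Q where "Q = p ^ n"
  define k where "k = per Q x"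
  have k: "k > 0" "x ^ (Q ^ k) = x" using per_props[OF assms[folded Q_def]] by (auto simp: k_def)
  have main: "i = j" if ij: "i < k" "j < k" "i \<le> j" "x ^ (Q ^ i) = x ^ (Q ^ j)" for i j
  proof -
    have "(x ^ (Q ^ (j - i))) ^ (Q ^ i) = x ^ (Q ^ i)"
      using ij by (simp add: pow_pow_mult)
    then have "x ^ (Q ^ (j - i)) = x" using frob_inj[of _ i] unfolding Q_def by blast
    then have "k dvd j - i" unfolding k_def by (rule per_dvd[OF assms[folded Q_def]])
    then show "i = j" using ij by (metis diff_diff_cancel diff_le_self dvd_imp_le le_antisym
          less_imp_diff_less not_less zero_less_diff)
  qed
  show ?thesis unfolding inj_on_def Q_def[symmetric] k_def[symmetric]
    by (metis lessThan_iff main nat_le_linear)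
qed

lemma card_orb:
  assumes "t > 0" "(x::'a) ^ ((p^n) ^ t) = x"
  shows "card (orb (p^n) x) = per (p^n) x"
  unfolding orb_def using card_image[OF orb_inj[OF assms]] by simp

lemma poly_frob:
  assumes "\<forall>i. coeff g i \<in> ffield_set (p ^ n)"
  shows "poly g ((y::'a) ^ ((p ^ n) ^ j)) = (poly g y) ^ ((p ^ n) ^ j)"
proof -
  have cf: "(coeff g i) ^ ((p ^ n) ^ j) = coeff g i" for i
    using assms pow_fix_iter[of "coeff g i" "p^n" j] by (simp add: ffield_set_def)
  have e: "(p ^ n) ^ j = p ^ (n * j)" by (simp add: power_mult)
  have "(poly g y) ^ ((p ^ n) ^ j) = (\<Sum>i\<le>degree g. (coeff g i * y ^ i) ^ ((p ^ n) ^ j))"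
    unfolding poly_altdef e by (rule fd_sum[OF charp pp])
  also have "\<dots> = (\<Sum>i\<le>degree g. coeff g i * (y ^ ((p ^ n) ^ j)) ^ i)"
  proof (intro sum.cong refl)
    fix i
    have "(coeff g i * y ^ i) ^ ((p ^ n) ^ j) = coeff g i ^ ((p ^ n) ^ j) * (y ^ i) ^ ((p ^ n) ^ j)"
      by (rule power_mult_distrib)
    also have "\<dots> = coeff g i * (y ^ ((p ^ n) ^ j)) ^ i"
      by (simp only: cf) (metis power_mult mult.commute)
    finally show "(coeff g i * y ^ i) ^ ((p ^ n) ^ j) = coeff g i * (y ^ ((p ^ n) ^ j)) ^ i" .
  qed
  finally show ?thesis by (simp add: poly_altdef)
qed

lemma map_frob_mult:
  "map_poly (\<lambda>c. c ^ (p ^ k)) (a * b) = map_poly (\<lambda>c. c ^ (p ^ k)) a * map_poly (\<lambda>c. (c::'a) ^ (p ^ k)) b"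
proof -
  have z: "(0::'a) ^ (p ^ k) = 0" using prime_gt_0_nat[OF pp] by (simp add: power_0_left)
  show ?thesis
    by (intro poly_eqI) (simp add: coeff_map_poly z coeff_mult fd_sum[OF charp pp] power_mult_distrib)
qed

lemma map_frob_prod:
  "finite A \<Longrightarrow> map_poly (\<lambda>c. c ^ (p ^ k)) (\<Prod>y\<in>A. f y) = (\<Prod>y\<in>A. map_poly (\<lambda>c. (c::'a) ^ (p ^ k)) (f y))"
  by (induction A rule: finite_induct) (simp_all add: map_frob_mult)

lemma map_frob_lin: "map_poly (\<lambda>c. c ^ (p ^ k)) [:- y, 1:] = [:- ((y::'a) ^ (p ^ k)), 1:]"
proof -
  have z: "(0::'a) ^ (p ^ k) = 0" using prime_gt_0_nat[OF pp] by (simp add: power_0_left)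
  show ?thesis by (simp add: map_poly_pCons z fd_neg[OF charp pp])
qed

context
  fixes x :: 'a and t :: nat and g :: "'a poly"
  assumes t: "t > 0" and xt: "x ^ ((p^n) ^ t) = x"
    and mp: "is_min_poly (ffield_set (p ^ n)) x g"
begin

lemma mp_props: "g \<noteq> 0" "lead_coeff g = 1" "\<forall>i. coeff g i \<in> ffield_set (p ^ n)" "poly g x = 0"
  using mp unfolding is_min_poly_def by auto

lemma mp_orb_roots: "y \<in> orb (p^n) x \<Longrightarrow> poly g y = 0"
  using orb_iff[OF t xt] poly_frob[OF mp_props(3)] mp_props(4) prime_gt_0_nat[OF pp]
  by (auto simp: power_0_left)

lemma deg_mp: "degree g = per (p^n) x"
proof (rule antisym)
  define Ob where "Ob = orb (p^n) x"
  define m where "m = (\<Prod>y\<in>Ob. [:- y, 1:])"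
  have finO: "finite Ob" by simp
  have m0: "m \<noteq> 0" unfolding m_def by (auto simp: finO)
  have dm: "degree m = card Ob"
  proof -
    have "degree m = (\<Sum>y\<in>Ob. degree [:- y, 1:])" unfolding m_def
      by (rule degree_prod_sum_eq) simp
    then show ?thesis by simp
  qed
  have fr_in: "y ^ (p ^ n) \<in> Ob" if "y \<in> Ob" for y
  proof -
    have "\<exists>j. y = x ^ ((p^n) ^ j)" using that unfolding Ob_def by (rule orb_iff[OF t xt, THEN iffD1])
    then obtain j where "y = x ^ ((p^n) ^ j)" by blast
    then have e: "y ^ (p ^ n) = x ^ ((p^n) ^ Suc j)" by (metis power_Suc2 power_mult)
    show ?thesis unfolding Ob_def e by (rule orb_all[OF t xt])
  qed
  have injf: "inj_on (\<lambda>y. y ^ (p ^ n)) Ob"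
    by (intro inj_onI) (rule frob_inj[of _ 1], simp)
  have imO: "(\<lambda>y. y ^ (p ^ n)) ` Ob = Ob"
    using card_image[OF injf] fr_in by (intro card_subset_eq) auto
  have "map_poly (\<lambda>c. c ^ (p ^ n)) m = (\<Prod>y\<in>Ob. [:- (y ^ (p ^ n)), 1:])"
    unfolding m_def by (simp add: map_frob_prod map_frob_lin)
  also have "\<dots> = (\<Prod>z\<in>(\<lambda>y. y ^ (p ^ n)) ` Ob. [:- z, 1:])"
    by (rule prod.reindex[OF injf, symmetric, unfolded comp_def])
  also have "\<dots> = m" unfolding imO m_def ..
  finally have mm: "map_poly (\<lambda>c. c ^ (p ^ n)) m = m" .
  have z: "(0::'a) ^ (p ^ n) = 0" using prime_gt_0_nat[OF pp] by (simp add: power_0_left)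
  have cm: "\<forall>i. coeff m i \<in> ffield_set (p ^ n)"
  proof
    fix i
    have "coeff m i ^ (p ^ n) = coeff (map_poly (\<lambda>c. c ^ (p ^ n)) m) i"
      by (simp add: coeff_map_poly z)
    then show "coeff m i \<in> ffield_set (p ^ n)" using mm by (simp add: ffield_set_def)
  qed
  have xO: "x \<in> Ob" unfolding Ob_def by (rule orb_self[OF t xt])
  have pm: "poly m x = 0" unfolding m_def poly_prod using xO finO
    by (intro prod_zero) auto
  have "degree g \<le> degree m" using mp m0 cm pm unfolding is_min_poly_def by blast
  then show "degree g \<le> per (p^n) x" using dm card_orb[OF t xt] unfolding Ob_def by simp
  have "Ob \<subseteq> {y. poly g y = 0}" using mp_orb_roots unfolding Ob_def by auto
  then have "card Ob \<le> card {y. poly g y = 0}" by (intro card_mono) auto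
  also have "\<dots> \<le> degree g" by (rule card_poly_roots_bound[OF mp_props(1)])
  finally show "per (p^n) x \<le> degree g" using card_orb[OF t xt] unfolding Ob_def by simp
qed

lemma mp_roots_orb: "poly g y = 0 \<Longrightarrow> y \<in> orb (p^n) x"
proof (rule ccontr)
  assume y: "poly g y = 0" "y \<notin> orb (p^n) x"
  have "insert y (orb (p^n) x) \<subseteq> {y. poly g y = 0}" using mp_orb_roots y by auto
  then have "card (insert y (orb (p^n) x)) \<le> card {y. poly g y = 0}" by (intro card_mono) auto
  also have "\<dots> \<le> degree g" by (rule card_poly_roots_bound[OF mp_props(1)])
  finally show False using y(2) card_orb[OF t xt] deg_mp by simp
qed

end

lemma mp_unique:
  assumes "is_min_poly (ffield_set (p ^ n)) (x::'a) g" "is_min_poly (ffield_set (p ^ n)) x h"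
  shows "g = h"
proof (rule ccontr)
  assume ne: "g \<noteq> h"
  define f where "f = g - h"
  have f0: "f \<noteq> 0" using ne by (simp add: f_def)
  have dgh: "degree g = degree h" using assms unfolding is_min_poly_def by (meson antisym)
  have cf: "\<forall>i. coeff f i \<in> ffield_set (p ^ n)"
    using assms unfolding is_min_poly_def f_def by (auto intro: ffs_diff[OF charp pp])
  have pf: "poly f x = 0" using assms unfolding is_min_poly_def f_def by simp
  have "degree g \<le> degree f" using assms(1) f0 cf pf unfolding is_min_poly_def by blast
  moreover have "degree f \<le> degree g" unfolding f_def using degree_diff_le[of g "degree g" h] dgh by simp
  moreover have "coeff f (degree g) = 0"
    using assms dgh unfolding is_min_poly_def f_def by simp
  ultimately show False using f0 by (metis antisym leading_coeff_0_iff)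
qed

end

lemma vand:
  fixes X :: "'a::field set" and w :: "'a \<Rightarrow> 'a"
  assumes fin: "finite X" and X0: "0 \<notin> X"
    and hyp: "\<And>i. 1 \<le> i \<Longrightarrow> i \<le> card X \<Longrightarrow> (\<Sum>x\<in>X. w x * x ^ i) = 0"
    and x0: "x0 \<in> X"
  shows "w x0 = 0"
proof -
  define R where "R = (\<Prod>y\<in>X-{x0}. [:- y, 1:])"
  define Q where "Q = pCons 0 R"
  have R0: "R \<noteq> 0" unfolding R_def using fin by auto
  have dR: "degree R = card X - 1"
  proof -
    have "degree R = (\<Sum>y\<in>X-{x0}. degree [:- y, 1:])" unfolding R_def
      by (rule degree_prod_sum_eq) simp
    then show ?thesis using fin x0 by simp
  qed
  have dQ: "degree Q = card X" unfolding Q_def using R0 dR fin x0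
    by (simp add: card_gt_0_iff) (metis card_0_eq empty_iff Suc_pred neq0_conv)
  have pQ: "poly Q z = z * poly R z" for z unfolding Q_def by simp
  have c0: "coeff Q 0 = 0" unfolding Q_def by simp
  have "(\<Sum>x\<in>X. w x * poly Q x) = (\<Sum>x\<in>X. w x * (\<Sum>i\<le>card X. coeff Q i * x ^ i))"
    by (simp add: poly_altdef dQ)
  also have "\<dots> = (\<Sum>i\<le>card X. coeff Q i * (\<Sum>x\<in>X. w x * x ^ i))"
    by (simp add: sum_distrib_left sum_distrib_right mult_ac) (rule sum.swap)
  also have "\<dots> = 0"
  proof (intro sum.neutral ballI)
    fix i assume i: "i \<in> {..card X}"
    show "coeff Q i * (\<Sum>x\<in>X. w x * x ^ i) = 0"
    proof (cases "i = 0")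
      case True then show ?thesis using c0 by simp
    next
      case False then show ?thesis using hyp[of i] i by simp
    qed
  qed
  finally have s0: "(\<Sum>x\<in>X. w x * poly Q x) = 0" .
  have "(\<Sum>x\<in>X. w x * poly Q x) = w x0 * poly Q x0"
  proof (rule sum.remove[OF fin x0, THEN trans], simp)
    show "(\<Sum>x\<in>X - {x0}. w x * poly Q x) = 0"
    proof (intro sum.neutral ballI)
      fix x assume x: "x \<in> X - {x0}"
      have "poly R x = 0" unfolding R_def poly_prod using x fin by (intro prod_zero) auto
      then show "w x * poly Q x = 0" by (simp add: pQ)
    qed
  qed
  moreover have "poly Q x0 \<noteq> 0"
  proof -
    have "poly R x0 \<noteq> 0" unfolding R_def poly_prod using fin by auto
    then show ?thesis using X0 x0 pQ by auto
  qed
  ultimately show ?thesis using s0 by simp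
qed

lemma per_dvd_iff:
  assumes "t > 0" "(x::'a::field) ^ (Q ^ t) = x"
  shows "x ^ (Q ^ j) = x \<longleftrightarrow> per Q x dvd j"
proof
  assume "x ^ (Q ^ j) = x" then show "per Q x dvd j" by (rule per_dvd[OF assms])
next
  assume "per Q x dvd j"
  then obtain c where c: "j = per Q x * c" by blast
  show "x ^ (Q ^ j) = x" unfolding c using pow_fix_iter[of x "Q ^ per Q x" c] per_props(2)[OF assms]
    by (simp add: power_mult)
qed

lemma sum_per:
  assumes "t > 0" "(x::'a::field) ^ (Q ^ t) = x" "per Q x dvd m"
  shows "(\<Sum>j<m. (x ^ (Q ^ j)) ^ i) = of_nat (m div per Q x) * (\<Sum>j<per Q x. (x ^ (Q ^ j)) ^ i)"
proof -
  define k where "k = per Q x"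
  have k: "k > 0" "x ^ (Q ^ k) = x" using per_props[OF assms(1,2)] by (auto simp: k_def)
  obtain c where c: "m = k * c" using assms(3) by (auto simp: k_def)
  have "(\<Sum>j<k * c. (x ^ (Q ^ j)) ^ i) = of_nat c * (\<Sum>j<k. (x ^ (Q ^ j)) ^ i)"
  proof (induction c)
    case (Suc c)
    have "(\<Sum>j<k * Suc c. (x ^ (Q ^ j)) ^ i) =
          (\<Sum>j<k * c. (x ^ (Q ^ j)) ^ i) + (\<Sum>j<k. (x ^ (Q ^ (k * c + j))) ^ i)"
      by (simp add: sum_lessThan_add_split add.commute[of k])
    also have "(\<Sum>j<k. (x ^ (Q ^ (k * c + j))) ^ i) = (\<Sum>j<k. (x ^ (Q ^ j)) ^ i)"
    proof (intro sum.cong refl)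
      fix j assume "j \<in> {..<k}"
      then have "(k * c + j) mod k = j mod k" by simp
      then show "(x ^ (Q ^ (k * c + j))) ^ i = (x ^ (Q ^ j)) ^ i"
        using pow_mod[OF k(2), of "k * c + j"] pow_mod[OF k(2), of j] by simp
    qed
    finally show ?case using Suc by (simp add: algebra_simps)
  qed simp
  then show ?thesis using k(1) by (simp add: c k_def)
qed

lemma orb_rev:
  assumes "t > 0" "(x::'a::field) ^ (Q ^ t) = x"
  shows "(x ^ (Q ^ j)) ^ (Q ^ ((per Q x - 1) * j)) = x"
proof -
  have k: "per Q x > 0" "x ^ (Q ^ per Q x) = x" using per_props[OF assms] by auto
  have "(x ^ (Q ^ j)) ^ (Q ^ ((per Q x - 1) * j)) = x ^ (Q ^ (per Q x * j))"
    using k(1) by (simp add: pow_pow_mult algebra_simps)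
  also have "\<dots> = x" using per_dvd_iff[OF assms] by simp
  finally show ?thesis .
qed

lemma nonzero_pow: "(x::'a::field) \<noteq> 0 \<Longrightarrow> x ^ m \<noteq> 0" by simp

definition uu :: "nat \<Rightarrow> nat \<Rightarrow> nat \<Rightarrow> 'a::field \<Rightarrow> 'a \<Rightarrow> int \<Rightarrow> nat \<Rightarrow> 'a" where
  "uu Q r s \<alpha> \<beta> \<epsilon> i = (\<Sum>j<r. (\<alpha> ^ (Q ^ j)) ^ i) + of_int \<epsilon> * (\<Sum>j<s. (\<beta> ^ (Q ^ j)) ^ i)"

definition cnd :: "nat \<Rightarrow> nat \<Rightarrow> nat \<Rightarrow> nat \<Rightarrow> 'a::field \<Rightarrow> 'a \<Rightarrow> 'a poly \<Rightarrow> 'a poly \<Rightarrow> int \<Rightarrow> bool" where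
  "cnd p Q r s \<alpha> \<beta> g h \<epsilon> = ((g = h \<and> int (p * degree g) dvd int r + \<epsilon> * int s)
      \<or> (\<alpha> \<in> A_set p Q r \<and> \<beta> \<in> A_set p Q s))"

lemma A_iff:
  assumes "t > 0" "(x::'a::field) ^ (Q ^ t) = x" "x \<noteq> 0" "prime p"
  shows "x \<in> A_set p Q t \<longleftrightarrow> p dvd (t div per Q x)"
proof -
  define k where "k = per Q x"
  have k: "k > 0" "k dvd t" using per_props[OF assms(1,2)] per_dvd[OF assms(1,2) assms(2)]
    by (auto simp: k_def)
  obtain a where a: "t = k * a" using k(2) by blast
  have ta: "t div k = a" using a k(1) by simp
  show ?thesis
  proof (cases "p dvd t")
    case True
    have "x \<in> A_set p Q t \<longleftrightarrow> k dvd t div p"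
      using True per_dvd_iff[OF assms(1,2), of "t div p"] by (simp add: A_set_def ffield_set_def k_def)
    also have "\<dots> \<longleftrightarrow> p dvd a"
    proof
      assume "k dvd t div p"
      then obtain c where c: "t div p = k * c" by blast
      have "t = p * (t div p)" using True by simp
      then have "k * a = k * (p * c)" using a c by (simp add: algebra_simps)
      then have "a = p * c" using k(1) by simp
      then show "p dvd a" by simp
    next
      assume "p dvd a"
      then obtain b where "a = p * b" by blast
      then have "t div p = k * b" using a assms(4) by (simp add: prime_gt_0_nat algebra_simps)
      then show "k dvd t div p" by simp
    qed
    finally show ?thesis using ta k_def by simp
  next
    case False
    have "\<not> p dvd a" using False a by (metis dvd_mult)
    then show ?thesis using False assms(3) ta by (simp add: A_set_def k_def)
  qed
qed

context
  fixes p n :: nat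
  assumes charp: "CHAR('a::{field,finite}) = p" and pp: "prime p" and npos: "n > 0"
begin

lemma sum_orb_eq:
  assumes "t > 0" "(x::'a) ^ ((p^n) ^ t) = x" "per (p^n) x dvd m"
  shows "(\<Sum>j<m. (x ^ ((p^n) ^ j)) ^ i) = of_nat (m div per (p^n) x) * (\<Sum>y\<in>orb (p^n) x. y ^ i)"
proof -
  have "(\<Sum>y\<in>orb (p^n) x. y ^ i) = (\<Sum>j<per (p^n) x. (x ^ ((p^n) ^ j)) ^ i)"
    unfolding orb_def by (subst sum.reindex[OF orb_inj[OF charp pp npos assms(1,2)]]) simp
  then show ?thesis using sum_per[OF assms] by simp
qed

lemma mp_transfer:
  assumes t: "t > 0" "(x::'a) ^ ((p^n) ^ t) = x" and t': "t' > 0" "y ^ ((p^n) ^ t') = y"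
    and mpg: "is_min_poly (ffield_set (p^n)) x g" and mph: "is_min_poly (ffield_set (p^n)) y h"
    and gy: "poly g y = 0"
  shows "g = h"
proof -
  note gp = mp_props[OF charp pp npos t mpg] and hp = mp_props[OF charp pp npos t' mph]
  have "y \<in> orb (p^n) x" by (rule mp_roots_orb[OF charp pp npos t mpg gy])
  then obtain c where c: "y = x ^ ((p^n) ^ c)" using orb_iff[OF t] by blast
  define e where "e = (per (p^n) x - 1) * c"
  have xy: "x = y ^ ((p^n) ^ e)" using orb_rev[OF t, of c] c by (simp add: e_def)
  have "poly h (y ^ ((p^n) ^ e)) = 0" unfolding poly_frob[OF charp pp npos hp(3)] using hp(4)
    prime_gt_0_nat[OF pp] by (simp add: power_0_left)
  then have hx: "poly h x = 0" using xy by simp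
  have d1: "degree h \<le> degree g" using mph gp(1,3) gy unfolding is_min_poly_def by blast
  have d2: "degree g \<le> degree h" using mpg hp(1,3) hx unfolding is_min_poly_def by blast
  have mg: "\<And>f. f \<noteq> 0 \<Longrightarrow> (\<forall>i. coeff f i \<in> ffield_set (p^n)) \<Longrightarrow> poly f x = 0 \<Longrightarrow> degree g \<le> degree f"
    using mpg unfolding is_min_poly_def by blast
  have "is_min_poly (ffield_set (p^n)) x h"
    unfolding is_min_poly_def
  proof (intro conjI allI impI)
    fix f :: "'a poly" assume "f \<noteq> 0 \<and> (\<forall>i. coeff f i \<in> ffield_set (p ^ n)) \<and> poly f x = 0"
    then show "degree h \<le> degree f" using mg[of f] d1 by simp
  qed (use hp hx in auto)
  then show ?thesis by (rule mp_unique[OF charp pp npos mpg])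
qed

lemma orb_disj:
  assumes t: "t > 0" "(x::'a) ^ ((p^n) ^ t) = x" and t': "t' > 0" "y ^ ((p^n) ^ t') = y"
    and mpg: "is_min_poly (ffield_set (p^n)) x g" and mph: "is_min_poly (ffield_set (p^n)) y h"
    and ne: "g \<noteq> h"
  shows "orb (p^n) x \<inter> orb (p^n) y = {}"
proof (rule ccontr)
  assume "orb (p^n) x \<inter> orb (p^n) y \<noteq> {}"
  then obtain z where z: "z \<in> orb (p^n) x" "z \<in> orb (p^n) y" by blast
  obtain j where j: "z = y ^ ((p^n) ^ j)" using z(2) orb_iff[OF t'] by blast
  define e where "e = (per (p^n) y - 1) * j"
  have yz: "y = z ^ ((p^n) ^ e)" using orb_rev[OF t', of j] j by (simp add: e_def)
  have "poly g (z ^ ((p^n) ^ e)) = 0"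
    unfolding poly_frob[OF charp pp npos mp_props(3)[OF charp pp npos t mpg]]
    using mp_orb_roots[OF charp pp npos t mpg z(1)] prime_gt_0_nat[OF pp] by (simp add: power_0_left)
  then have "poly g y = 0" using yz by simp
  then show False using mp_transfer[OF t t' mpg mph] ne by simp
qed

lemma orb_nz:
  assumes t: "t > 0" "(x::'a) ^ ((p^n) ^ t) = x" and "x \<noteq> 0"
  shows "0 \<notin> orb (p^n) x"
proof
  assume "0 \<in> orb (p^n) x"
  then obtain j where "0 = x ^ ((p^n) ^ j)" using orb_iff[OF t] by blast
  then show False using assms(3) by simp
qed

end

context
  fixes p n d r s :: nat and \<alpha> \<beta> :: "'a::{field,finite}" and g h :: "'a poly" and \<epsilon> :: int
  assumes charp: "CHAR('a::{field,finite}) = p" and pp: "prime p" and npos: "n > 0"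
    and eps: "\<epsilon> = 1 \<or> \<epsilon> = -1"
    and rpos: "r > 0" and spos: "s > 0" and rsd: "r + s < d"
    and aF: "\<alpha> \<in> ffield_set ((p^n)^r)" and a0: "\<alpha> \<noteq> 0"
    and bF: "\<beta> \<in> ffield_set ((p^n)^s)" and b0: "\<beta> \<noteq> 0"
    and mpg: "is_min_poly (ffield_set (p^n)) \<alpha> g" and mph: "is_min_poly (ffield_set (p^n)) \<beta> h"
begin

lemma key_both:
  "(cnd p (p^n) r s \<alpha> \<beta> g h \<epsilon> \<longrightarrow> (\<forall>i. uu (p^n) r s \<alpha> \<beta> \<epsilon> i = 0)) \<and>
   ((\<forall>i. 1 \<le> i \<and> i < d \<longrightarrow> uu (p^n) r s \<alpha> \<beta> \<epsilon> i = 0) \<longrightarrow> cnd p (p^n) r s \<alpha> \<beta> g h \<epsilon>)"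
proof -
  have at: "\<alpha> ^ ((p^n)^r) = \<alpha>" using aF by (simp add: ffield_set_def)
  have bt: "\<beta> ^ ((p^n)^s) = \<beta>" using bF by (simp add: ffield_set_def)
  have kag: "per (p^n) \<alpha> = degree g" using deg_mp[OF charp pp npos rpos at mpg] by simp
  have kbh: "per (p^n) \<beta> = degree h" using deg_mp[OF charp pp npos spos bt mph] by simp
  have kadvd: "per (p^n) \<alpha> dvd r" by (rule per_dvd[OF rpos at at])
  have kbdvd: "per (p^n) \<beta> dvd s" by (rule per_dvd[OF spos bt bt])
  have kapos: "per (p^n) \<alpha> > 0" "per (p^n) \<alpha> \<le> r" using per_props[OF rpos at] by auto
  have kbpos: "per (p^n) \<beta> > 0" "per (p^n) \<beta> \<le> s" using per_props[OF spos bt] by auto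
  define a :: 'a where "a = of_nat (r div per (p^n) \<alpha>)"
  define b :: 'a where "b = of_nat (s div per (p^n) \<beta>)"
  define e :: 'a where "e = of_int \<epsilon>"
  define Ta where "Ta i = (\<Sum>y\<in>orb (p^n) \<alpha>. y ^ i)" for i
  define Tb where "Tb i = (\<Sum>y\<in>orb (p^n) \<beta>. y ^ i)" for i
  have ueq: "uu (p^n) r s \<alpha> \<beta> \<epsilon> i = a * Ta i + e * (b * Tb i)" for i
    unfolding uu_def a_def b_def e_def Ta_def Tb_def
    using sum_orb_eq[OF charp pp npos rpos at kadvd, of i] sum_orb_eq[OF charp pp npos spos bt kbdvd, of i]
    by simp
  have Aa: "\<alpha> \<in> A_set p (p^n) r \<longleftrightarrow> a = 0"
    unfolding a_def A_iff[OF rpos at a0 pp] by (simp add: of_nat_eq0_p[OF charp pp])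
  have Ab: "\<beta> \<in> A_set p (p^n) s \<longleftrightarrow> b = 0"
    unfolding b_def A_iff[OF spos bt b0 pp] by (simp add: of_nat_eq0_p[OF charp pp])
  have e0: "e \<noteq> 0" using eps by (auto simp: e_def)
  have aorb: "\<alpha> \<in> orb (p^n) \<alpha>" by (rule orb_self[OF rpos at])
  have borb: "\<beta> \<in> orb (p^n) \<beta>" by (rule orb_self[OF spos bt])
  have ca: "card (orb (p^n) \<alpha>) = per (p^n) \<alpha>" by (rule card_orb[OF charp pp npos rpos at])
  have cb: "card (orb (p^n) \<beta>) = per (p^n) \<beta>" by (rule card_orb[OF charp pp npos spos bt])
  show ?thesis
  proof (cases "g = h")
    case True
    define k where "k = degree g"
    have kb: "per (p^n) \<beta> = k" using kbh True by (simp add: k_def)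
    have ka: "per (p^n) \<alpha> = k" using kag by (simp add: k_def)
    have "poly g \<beta> = 0" using mp_props(4)[OF charp pp npos spos bt mph] True by simp
    then have "\<beta> \<in> orb (p^n) \<alpha>" by (rule mp_roots_orb[OF charp pp npos rpos at mpg])
    then obtain c where c: "\<beta> = \<alpha> ^ ((p^n) ^ c)" using orb_iff[OF rpos at] by blast
    have sub: "orb (p^n) \<beta> \<subseteq> orb (p^n) \<alpha>"
    proof
      fix y assume "y \<in> orb (p^n) \<beta>"
      then obtain j where "y = \<beta> ^ ((p^n) ^ j)" using orb_iff[OF spos bt] by blast
      then have "y = \<alpha> ^ ((p^n) ^ (c + j))" using c by (simp add: pow_pow_mult)
      then show "y \<in> orb (p^n) \<alpha>" using orb_all[OF rpos at] by simp
    qed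
    have orbeq: "orb (p^n) \<beta> = orb (p^n) \<alpha>"
      by (rule card_subset_eq) (use sub ca cb ka kb in auto)
    have TbTa: "Tb = Ta" unfolding Ta_def Tb_def orbeq ..
    have ueq2: "uu (p^n) r s \<alpha> \<beta> \<epsilon> i = (a + e * b) * Ta i" for i
      unfolding ueq TbTa by (simp add: algebra_simps)
    obtain ra where ra: "r = k * ra" using kadvd ka by auto
    obtain sb where sb: "s = k * sb" using kbdvd kb by auto
    have kpos: "k > 0" using kapos ka by simp
    have ara: "a = of_nat ra" unfolding a_def ka ra using kpos by simp
    have bsb: "b = of_nat sb" unfolding b_def kb sb using kpos by simp
    have "int (p * degree g) dvd int r + \<epsilon> * int s \<longleftrightarrow> int p dvd int ra + \<epsilon> * int sb"
    proof -
      have "int r + \<epsilon> * int s = (int ra + \<epsilon> * int sb) * int k" by (simp add: ra sb algebra_simps)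
      moreover have "int (p * degree g) = int p * int k" by (simp add: k_def)
      ultimately show ?thesis using kpos
        by (simp only: dvd_times_right_cancel_iff[of "int k"])
    qed
    also have "\<dots> \<longleftrightarrow> (of_int (int ra + \<epsilon> * int sb) :: 'a) = 0" by (rule of_int_eq0_p[OF charp pp, symmetric])
    also have "\<dots> \<longleftrightarrow> a + e * b = 0" by (simp add: ara bsb e_def)
    finally have c1: "int (p * degree g) dvd int r + \<epsilon> * int s \<longleftrightarrow> a + e * b = 0" .
    have cnd_iff: "cnd p (p^n) r s \<alpha> \<beta> g h \<epsilon> \<longleftrightarrow> a + e * b = 0"
      unfolding cnd_def Aa Ab c1 using True by auto
    show ?thesis
    proof (intro conjI impI allI)
      fix i assume "cnd p (p^n) r s \<alpha> \<beta> g h \<epsilon>"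
      then show "uu (p^n) r s \<alpha> \<beta> \<epsilon> i = 0" using cnd_iff ueq2 by simp
    next
      assume hyp: "\<forall>i. 1 \<le> i \<and> i < d \<longrightarrow> uu (p ^ n) r s \<alpha> \<beta> \<epsilon> i = 0"
      have "(\<lambda>y. a + e * b) \<alpha> = 0"
      proof (rule vand[of "orb (p^n) \<alpha>" "\<lambda>y. a + e * b" \<alpha>])
        show "0 \<notin> orb (p^n) \<alpha>" by (rule orb_nz[OF charp pp npos rpos at a0])
        fix i assume i: "1 \<le> i" "i \<le> card (orb (p^n) \<alpha>)"
        then have "i < d" using ca kapos rsd by linarith
        then have "uu (p ^ n) r s \<alpha> \<beta> \<epsilon> i = 0" using hyp i by simp
        then show "(\<Sum>y\<in>orb (p^n) \<alpha>. (a + e * b) * y ^ i) = 0"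
          unfolding ueq2 Ta_def by (simp add: sum_distrib_left)
      qed (use aorb in auto)
      then show "cnd p (p^n) r s \<alpha> \<beta> g h \<epsilon>" using cnd_iff by simp
    qed
  next
    case False
    have disj: "orb (p^n) \<alpha> \<inter> orb (p^n) \<beta> = {}"
      by (rule orb_disj[OF charp pp npos rpos at spos bt mpg mph False])
    have cnd_iff: "cnd p (p^n) r s \<alpha> \<beta> g h \<epsilon> \<longleftrightarrow> a = 0 \<and> b = 0"
      unfolding cnd_def Aa Ab using False by auto
    show ?thesis
    proof (intro conjI impI allI)
      fix i assume "cnd p (p^n) r s \<alpha> \<beta> g h \<epsilon>"
      then show "uu (p^n) r s \<alpha> \<beta> \<epsilon> i = 0" using cnd_iff ueq by simp
    next
      assume hyp: "\<forall>i. 1 \<le> i \<and> i < d \<longrightarrow> uu (p ^ n) r s \<alpha> \<beta> \<epsilon> i = 0"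
      define X where "X = orb (p^n) \<alpha> \<union> orb (p^n) \<beta>"
      define w where "w y = (if y \<in> orb (p^n) \<alpha> then a else e * b)" for y
      have cX: "card X = per (p^n) \<alpha> + per (p^n) \<beta>"
        unfolding X_def using card_Un_disjoint[OF _ _ disj] ca cb by simp
      have sX: "(\<Sum>y\<in>X. w y * y ^ i) = uu (p^n) r s \<alpha> \<beta> \<epsilon> i" for i
      proof -
        have "(\<Sum>y\<in>X. w y * y ^ i) = (\<Sum>y\<in>orb (p^n) \<alpha>. w y * y ^ i) + (\<Sum>y\<in>orb (p^n) \<beta>. w y * y ^ i)"
          unfolding X_def by (rule sum.union_disjoint[OF _ _ disj]) auto
        also have "(\<Sum>y\<in>orb (p^n) \<alpha>. w y * y ^ i) = a * Ta i"
          unfolding Ta_def w_def by (simp add: sum_distrib_left)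
        also have "(\<Sum>y\<in>orb (p^n) \<beta>. w y * y ^ i) = e * (b * Tb i)"
        proof -
          have "(\<Sum>y\<in>orb (p^n) \<beta>. w y * y ^ i) = (\<Sum>y\<in>orb (p^n) \<beta>. e * b * y ^ i)"
            using disj by (intro sum.cong refl) (auto simp: w_def)
          then show ?thesis unfolding Tb_def by (simp add: sum_distrib_left mult.assoc)
        qed
        finally show ?thesis using ueq by simp
      qed
      have X0: "0 \<notin> X" unfolding X_def
        using orb_nz[OF charp pp npos rpos at a0] orb_nz[OF charp pp npos spos bt b0] by auto
      have vh: "\<And>i. 1 \<le> i \<Longrightarrow> i \<le> card X \<Longrightarrow> (\<Sum>y\<in>X. w y * y ^ i) = 0"
      proof -
        fix i assume i: "1 \<le> i" "i \<le> card X"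
        then have "i < d" using cX kapos kbpos rsd by linarith
        then show "(\<Sum>y\<in>X. w y * y ^ i) = 0" using hyp i sX by simp
      qed
      have "w \<alpha> = 0" by (rule vand[OF _ X0 vh]) (use aorb in \<open>auto simp: X_def\<close>)
      then have a0': "a = 0" using aorb by (simp add: w_def)
      have wb: "w \<beta> = 0" by (rule vand[OF _ X0 vh]) (use borb in \<open>auto simp: X_def\<close>)
      have "\<beta> \<notin> orb (p^n) \<alpha>" using borb disj by blast
      then have "b = 0" using e0 wb by (simp add: w_def)
      then show "cnd p (p^n) r s \<alpha> \<beta> g h \<epsilon>" using cnd_iff a0' by simp
    qed
  qed
qed

end

definition mkp :: "nat set \<Rightarrow> (nat \<Rightarrow> 'a::comm_semiring_1) \<Rightarrow> 'a poly" where
  "mkp I c = (\<Sum>i\<in>I. monom (c i) i)"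

lemma coeff_mkp: "finite I \<Longrightarrow> coeff (mkp I c) j = (if j \<in> I then c j else 0)"
  by (simp add: mkp_def coeff_sum coeff_monom)

lemma poly_mkp: "poly (mkp I c) x = (\<Sum>i\<in>I. c i * x ^ i)"
  by (simp add: mkp_def poly_sum poly_monom)

lemma Fam_sum:
  fixes \<Phi> :: "'a::field poly \<Rightarrow> 'b::comm_monoid_add"
  assumes pd: "\<not> p dvd d" and Q: "Q > 0"
  shows "sum \<Phi> (Fam p Q d) =
    sum (\<lambda>c. \<Phi> (mkp {i. i \<le> d \<and> \<not> p dvd i} c))
      (PiE {i. i \<le> d \<and> \<not> p dvd i} (\<lambda>i. if i = d then ffield_set Q - {0} else ffield_set Q))"
proof -
  define I where "I = {i. i \<le> d \<and> \<not> p dvd i}"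
  define D where "D = (\<lambda>i. if i = d then ffield_set Q - {0} else (ffield_set Q :: 'a set))"
  have finI: "finite I" unfolding I_def by simp
  have dI: "d \<in> I" using pd by (simp add: I_def)
  have z: "(0::'a) \<in> ffield_set Q" using Q by (simp add: ffs_0)
  have mk_in: "mkp I c \<in> Fam p Q d" if c: "c \<in> PiE I D" for c
  proof -
    have cf: "coeff (mkp I c) j = (if j \<in> I then c j else 0)" for j by (rule coeff_mkp[OF finI])
    have cd: "coeff (mkp I c) d \<noteq> 0" using c dI by (auto simp: cf D_def PiE_iff)
    have "degree (mkp I c) \<le> d" by (rule degree_le) (unfold cf, auto simp: I_def)
    moreover have "d \<le> degree (mkp I c)" using cd by (rule le_degree)
    ultimately have "degree (mkp I c) = d" by simp
    moreover have "coeff (mkp I c) i \<in> ffield_set Q" for i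
      using c z by (auto simp: cf D_def PiE_iff split: if_splits)
    moreover have "p dvd i \<Longrightarrow> coeff (mkp I c) i = 0" for i unfolding cf by (auto simp: I_def)
    ultimately show ?thesis using cd unfolding Fam_def by auto
  qed
  have re_in: "restrict (coeff f) I \<in> PiE I D" if f: "f \<in> Fam p Q d" for f
    using f unfolding Fam_def D_def by (auto simp: PiE_iff)
  have mk_re: "mkp I (restrict (coeff f) I) = f" if f: "f \<in> Fam p Q d" for f
  proof (rule poly_eqI)
    fix j
    show "coeff (mkp I (restrict (coeff f) I)) j = coeff f j"
    proof (cases "j \<in> I")
      case False
      then have "d < j \<or> p dvd j" by (auto simp: I_def)
      then have "coeff f j = 0" using f unfolding Fam_def by (auto intro: coeff_eq_0)
      then show ?thesis using False by (simp add: coeff_mkp[OF finI])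
    qed (simp add: coeff_mkp[OF finI])
  qed
  have re_mk: "restrict (coeff (mkp I c)) I = c" if c: "c \<in> PiE I D" for c
  proof
    fix i show "restrict (coeff (mkp I c)) I i = c i"
      using c by (cases "i \<in> I") (auto simp: coeff_mkp[OF finI] PiE_iff extensional_def)
  qed
  show ?thesis unfolding I_def[symmetric] D_def[symmetric]
    by (rule sum.reindex_bij_witness[of _ "mkp I" "\<lambda>f. restrict (coeff f) I"])
       (simp_all add: mk_in re_in mk_re re_mk del: restrict_PiE_iff, use re_in in auto)
qed

lemma psi_sum:
  assumes psi: "nontriv_add_char p \<psi>" and pp: "p > 0" and fin: "finite I"
    and y: "\<And>i. i \<in> I \<Longrightarrow> (y :: 'b \<Rightarrow> 'a) i \<in> ffield_set p"
    and cl: "\<And>a b. a \<in> ffield_set p \<Longrightarrow> b \<in> ffield_set p \<Longrightarrow> (a::'a::field) + b \<in> ffield_set p"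
  shows "\<psi> (\<Sum>i\<in>I. y i) = (\<Prod>i\<in>I. \<psi> (y i))"
proof -
  have "\<psi> (\<Sum>i\<in>I. y i) = (\<Prod>i\<in>I. \<psi> (y i)) \<and> (\<Sum>i\<in>I. y i) \<in> ffield_set p"
    using fin y
  proof (induction I rule: finite_induct)
    case empty then show ?case using psi0[OF psi pp] pp by (simp add: ffs_0)
  next
    case (insert x F)
    then have h: "\<psi> (sum y F) = (\<Prod>i\<in>F. \<psi> (y i))" "sum y F \<in> ffield_set p" "y x \<in> ffield_set p"
      by auto
    then show ?case using insert(1,2) psi cl[OF h(3) h(2)] unfolding nontriv_add_char_def by simp
  qed
  then show ?thesis by simp
qed

context
  fixes p :: nat
  assumes charp: "CHAR('a::{field,finite}) = p" and pp: "prime p"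
begin

lemma tr_sum: "tr_Fp p k (\<Sum>i\<in>I. (f i :: 'a)) = (\<Sum>i\<in>I. tr_Fp p k (f i))"
  unfolding tr_Fp_def by (simp add: fd_sum[OF charp pp]) (rule sum.swap)

lemma eps_Fp: "\<epsilon> = 1 \<or> \<epsilon> = -1 \<Longrightarrow> (of_int \<epsilon> :: 'a) \<in> ffield_set p"
  using ffs_neg[OF charp pp, of 1 1] by (auto simp: ffs_1)

lemma uu_frob:
  assumes eps: "\<epsilon> = 1 \<or> \<epsilon> = -1"
  shows "uu Q r s (\<alpha>::'a) \<beta> \<epsilon> (j * p) = (uu Q r s \<alpha> \<beta> \<epsilon> j) ^ p"
proof -
  have e: "(of_int \<epsilon> :: 'a) ^ p = of_int \<epsilon>" using eps_Fp[OF eps] by (simp add: ffield_set_def)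
  have s1: "(\<Sum>m<t. (x ^ (Q ^ m)) ^ j) ^ (p ^ 1) = (\<Sum>m<t. (x ^ (Q ^ m)) ^ (j * p))" for t and x :: 'a
    using fd_sum[OF charp pp, of "\<lambda>m. (x ^ (Q ^ m)) ^ j" "{..<t}" 1] by (simp add: power_mult)
  have "(uu Q r s \<alpha> \<beta> \<epsilon> j) ^ (p ^ 1) =
      (\<Sum>m<r. (\<alpha> ^ (Q ^ m)) ^ j) ^ (p ^ 1) + (of_int \<epsilon> * (\<Sum>m<s. (\<beta> ^ (Q ^ m)) ^ j)) ^ (p ^ 1)"
    unfolding uu_def by (rule fd_add[OF charp pp])
  also have "\<dots> = uu Q r s \<alpha> \<beta> \<epsilon> (j * p)"
    unfolding uu_def power_mult_distrib s1 using e by simp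
  finally show ?thesis by simp
qed

end

lemma uu_prop:
  assumes charp: "CHAR('a::{field,finite}) = p" and pp: "prime p" and eps: "\<epsilon> = 1 \<or> \<epsilon> = -1"
    and hyp: "\<forall>i. 1 \<le> i \<and> i < d \<and> \<not> p dvd i \<longrightarrow> uu Q r s (\<alpha>::'a) \<beta> \<epsilon> i = 0"
  shows "\<forall>i. 1 \<le> i \<and> i < d \<longrightarrow> uu Q r s \<alpha> \<beta> \<epsilon> i = 0"
proof (intro allI impI)
  fix i show "1 \<le> i \<and> i < d \<Longrightarrow> uu Q r s \<alpha> \<beta> \<epsilon> i = 0"
  proof (induction i rule: less_induct)
    case (less i)
    show ?case
    proof (cases "p dvd i")
      case False then show ?thesis using hyp less.prems by simp
    next
      case True
      then obtain j where j: "i = j * p" by (metis dvdE mult.commute)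
      have p1: "p > 1" using prime_gt_1_nat[OF pp] .
      have "j \<ge> 1" using less.prems j by (cases j) auto
      moreover have "j < i" using j p1 \<open>j \<ge> 1\<close> by simp
      ultimately have "uu Q r s \<alpha> \<beta> \<epsilon> j = 0" using less.IH less.prems by simp
      then show ?thesis unfolding j uu_frob[OF charp pp eps] using pp by (simp add: prime_gt_0_nat)
    qed
  qed
qed

lemma main_eps:
  fixes p n N d r s :: nat
    and \<psi> :: "'a::{field,finite} \<Rightarrow> complex"
    and \<alpha> \<beta> :: 'a and g h :: "'a poly" and \<epsilon> :: int
  assumes pp: "prime p" and p2: "p > 2" and npos: "n > 0"
    and cardU: "card (UNIV :: 'a set) = p ^ N" and nr: "n * r dvd N"
    and cop: "coprime d p"
    and psi: "nontriv_add_char p \<psi>"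
    and rpos: "r > 0" and spos: "s > 0" and rsd: "r + s < d"
    and aF: "\<alpha> \<in> ffield_set ((p^n) ^ r)" and a0: "\<alpha> \<noteq> 0"
    and bF: "\<beta> \<in> ffield_set ((p^n) ^ s)" and b0: "\<beta> \<noteq> 0"
    and mpg: "is_min_poly (ffield_set (p^n)) \<alpha> g" and mph: "is_min_poly (ffield_set (p^n)) \<beta> h"
    and eps: "\<epsilon> = 1 \<or> \<epsilon> = -1"
  shows "(\<Sum>f\<in>Fam p (p^n) d. \<psi> (tr_Fp p (n * r) (poly f \<alpha>) + of_int \<epsilon> * tr_Fp p (n * s) (poly f \<beta>)))
           / of_nat (card (Fam p (p^n) d :: 'a poly set))
         = (if cnd p (p^n) r s \<alpha> \<beta> g h \<epsilon> then 1 else 0)"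
proof -
  have charp: "CHAR('a) = p" by (rule char_eq[OF pp cardU])
  have ndvd: "n dvd N" using nr by (rule dvd_mult_left)
  have ppos: "p > 0" using pp by (simp add: prime_gt_0_nat)
  have pd: "\<not> p dvd d"
  proof
    assume "p dvd d"
    then have "is_unit p" using coprime_common_divisor[OF cop] by simp
    then show False using pp by simp
  qed
  define Fq where "Fq = (ffield_set (p^n) :: 'a set)"
  define I where "I = {i. i \<le> d \<and> \<not> p dvd i}"
  define D where "D = (\<lambda>i. if i = d then Fq - {0} else Fq)"
  define u where "u i = uu (p^n) r s \<alpha> \<beta> \<epsilon> i" for i
  have finI: "finite I" unfolding I_def by simp
  have dI: "d \<in> I" using pd by (simp add: I_def)
  have z: "(0::'a) \<in> Fq" using ppos by (simp add: Fq_def ffs_0)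
  have one: "(1::'a) \<in> Fq" by (simp add: Fq_def ffs_1)
  have e: "(of_int \<epsilon> :: 'a) \<in> ffield_set p" by (rule eps_Fp[OF charp pp eps])
  have at: "\<alpha> ^ ((p^n)^r) = \<alpha>" using aF by (simp add: ffield_set_def)
  have bt: "\<beta> ^ ((p^n)^s) = \<beta>" using bF by (simp add: ffield_set_def)
  have sumF: "(\<Sum>m<t. (x ^ ((p^n) ^ m)) ^ i) \<in> Fq" if xt: "x ^ ((p^n)^t) = x" for x :: 'a and t i
  proof -
    have "(\<Sum>m<t. (x ^ ((p^n) ^ m)) ^ i) ^ (p ^ n) = (\<Sum>m<t. ((x ^ ((p^n) ^ m)) ^ i) ^ (p ^ n))"
      by (rule fd_sum[OF charp pp])
    also have "\<dots> = (\<Sum>m<t. (x ^ ((p^n) ^ Suc m)) ^ i)"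
    proof (intro sum.cong refl)
      fix m
      have "((x ^ ((p^n) ^ m)) ^ i) ^ (p ^ n) = ((x ^ ((p^n) ^ m)) ^ (p ^ n)) ^ i"
        by (metis power_mult mult.commute)
      also have "(x ^ ((p^n) ^ m)) ^ (p ^ n) = x ^ ((p^n) ^ Suc m)" by (metis power_Suc2 power_mult)
      finally show "((x ^ ((p^n) ^ m)) ^ i) ^ (p ^ n) = (x ^ ((p^n) ^ Suc m)) ^ i" .
    qed
    also have "\<dots> = (\<Sum>m<t. (x ^ ((p^n) ^ m)) ^ i)"
    proof -
      have "(\<Sum>m<Suc t. (x ^ ((p^n) ^ m)) ^ i) = (x ^ ((p^n) ^ 0)) ^ i + (\<Sum>m<t. (x ^ ((p^n) ^ Suc m)) ^ i)"
        by (rule sum.lessThan_Suc_shift)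
      moreover have "(\<Sum>m<Suc t. (x ^ ((p^n) ^ m)) ^ i) = (\<Sum>m<t. (x ^ ((p^n) ^ m)) ^ i) + (x ^ ((p^n) ^ t)) ^ i"
        by simp
      ultimately show ?thesis using xt by simp
    qed
    finally show ?thesis by (simp add: Fq_def ffield_set_def)
  qed
  have uF: "u i \<in> Fq" for i
  proof -
    have eF: "(of_int \<epsilon> :: 'a) \<in> Fq" using e ffs_iter[of "of_int \<epsilon> :: 'a" p n] by (simp add: Fq_def)
    show ?thesis unfolding u_def uu_def Fq_def
      by (intro ffs_add[OF charp pp] ffs_mult sumF[OF at, unfolded Fq_def] sumF[OF bt, unfolded Fq_def] eF[unfolded Fq_def])
  qed
  have trs: "tr_Fp p (n * t) (a * x ^ i) = tr_Fp p n (a * (\<Sum>m<t. (x ^ ((p^n) ^ m)) ^ i))"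
    if a: "a \<in> Fq" for a x :: 'a and t i
  proof -
    have aq: "a ^ ((p^n) ^ m) = a" for m using a pow_fix_iter[of a "p^n" m] by (simp add: Fq_def ffield_set_def)
    have "(\<Sum>m<t. (a * x ^ i) ^ ((p ^ n) ^ m)) = (\<Sum>m<t. a * (x ^ ((p^n) ^ m)) ^ i)"
    proof (intro sum.cong refl)
      fix m
      have "(x ^ i) ^ ((p ^ n) ^ m) = (x ^ ((p^n) ^ m)) ^ i" by (metis power_mult mult.commute)
      then show "(a * x ^ i) ^ ((p ^ n) ^ m) = a * (x ^ ((p^n) ^ m)) ^ i"
        by (simp only: power_mult_distrib aq)
    qed
    then show ?thesis unfolding tr_split[OF charp pp] by (simp add: sum_distrib_left)
  qed
  have Lform: "tr_Fp p (n * r) (a * \<alpha> ^ i) + of_int \<epsilon> * tr_Fp p (n * s) (a * \<beta> ^ i) = tr_Fp p n (a * u i)"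
    if a: "a \<in> Fq" for a i
  proof -
    have "tr_Fp p (n * r) (a * \<alpha> ^ i) + of_int \<epsilon> * tr_Fp p (n * s) (a * \<beta> ^ i)
        = tr_Fp p n (a * (\<Sum>m<r. (\<alpha> ^ ((p^n) ^ m)) ^ i)) + tr_Fp p n (of_int \<epsilon> * (a * (\<Sum>m<s. (\<beta> ^ ((p^n) ^ m)) ^ i)))"
      unfolding trs[OF a] tr_scal[OF charp pp e] ..
    also have "\<dots> = tr_Fp p n (a * u i)"
      unfolding tr_add[OF charp pp, symmetric] u_def uu_def by (simp add: algebra_simps)
    finally show ?thesis .
  qed
  have trF: "tr_Fp p n (a * u i) \<in> ffield_set p" if "a \<in> Fq" for a i
    by (rule tr_in_Fp[OF charp pp]) (use that uF in \<open>auto intro: ffs_mult simp: Fq_def\<close>)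
  have summand: "\<psi> (tr_Fp p (n * r) (poly (mkp I c) \<alpha>) + of_int \<epsilon> * tr_Fp p (n * s) (poly (mkp I c) \<beta>))
      = (\<Prod>i\<in>I. \<psi> (tr_Fp p n (c i * u i)))" if c: "c \<in> PiE I D" for c
  proof -
    have cF: "c i \<in> Fq" if "i \<in> I" for i using c that by (auto simp: D_def PiE_iff split: if_splits)
    have "tr_Fp p (n * r) (poly (mkp I c) \<alpha>) + of_int \<epsilon> * tr_Fp p (n * s) (poly (mkp I c) \<beta>)
        = (\<Sum>i\<in>I. tr_Fp p (n * r) (c i * \<alpha> ^ i) + of_int \<epsilon> * tr_Fp p (n * s) (c i * \<beta> ^ i))"
      unfolding poly_mkp tr_sum[OF charp pp] by (simp add: sum.distrib sum_distrib_left)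
    also have "\<dots> = (\<Sum>i\<in>I. tr_Fp p n (c i * u i))" using Lform cF by simp
    finally show ?thesis
      using psi_sum[OF psi ppos finI, of "\<lambda>i. tr_Fp p n (c i * u i)"] trF cF ffs_add[OF charp pp, of _ 1]
      by simp
  qed
  have S: "(\<Sum>f\<in>Fam p (p^n) d. \<psi> (tr_Fp p (n * r) (poly f \<alpha>) + of_int \<epsilon> * tr_Fp p (n * s) (poly f \<beta>)))
      = (\<Prod>i\<in>I. \<Sum>a\<in>D i. \<psi> (tr_Fp p n (a * u i)))"
  proof -
    have "(\<Sum>f\<in>Fam p (p^n) d. \<psi> (tr_Fp p (n * r) (poly f \<alpha>) + of_int \<epsilon> * tr_Fp p (n * s) (poly f \<beta>)))
        = (\<Sum>c\<in>PiE I D. \<psi> (tr_Fp p (n * r) (poly (mkp I c) \<alpha>) + of_int \<epsilon> * tr_Fp p (n * s) (poly (mkp I c) \<beta>)))"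
      unfolding I_def D_def Fq_def by (rule Fam_sum[OF pd]) (use ppos in simp)
    also have "\<dots> = (\<Sum>c\<in>PiE I D. \<Prod>i\<in>I. \<psi> (tr_Fp p n (c i * u i)))"
      by (intro sum.cong refl summand)
    also have "\<dots> = (\<Prod>i\<in>I. \<Sum>a\<in>D i. \<psi> (tr_Fp p n (a * u i)))"
      by (rule prod_sum_PiE[symmetric]) (auto simp: finI)
    finally show ?thesis .
  qed
  have C: "card (Fam p (p^n) d :: 'a poly set) = (\<Prod>i\<in>I. card (D i))"
  proof -
    have "card (Fam p (p^n) d :: 'a poly set) = (\<Sum>f\<in>(Fam p (p^n) d :: 'a poly set). (1::nat))" by simp
    also have "\<dots> = (\<Sum>c\<in>PiE I D. (1::nat))"
      unfolding I_def D_def Fq_def by (rule Fam_sum[OF pd]) (use ppos in simp)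
    also have "\<dots> = card (PiE I D)" by simp
    also have "\<dots> = (\<Prod>i\<in>I. card (D i))" by (rule card_PiE[OF finI])
    finally show ?thesis .
  qed
  have Fact: "(\<Sum>a\<in>D i. \<psi> (tr_Fp p n (a * u i))) =
      (if u i = 0 then of_nat (card (D i)) else if i = d then -1 else 0)" if i: "i \<in> I" for i
  proof -
    have cs: "(\<Sum>a\<in>Fq. \<psi> (tr_Fp p n (a * u i))) = (if u i = 0 then of_nat (card Fq) else 0)"
      unfolding Fq_def by (rule charsum[OF charp pp cardU ndvd npos psi uF[unfolded Fq_def]])
    show ?thesis
    proof (cases "i = d")
      case False then show ?thesis using cs by (simp add: D_def)
    next
      case True
      have "(\<Sum>a\<in>D i. \<psi> (tr_Fp p n (a * u i))) = (\<Sum>a\<in>Fq. \<psi> (tr_Fp p n (a * u i))) - \<psi> (tr_Fp p n (0 * u i))"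
        using True z by (simp add: D_def sum_diff1)
      also have "\<psi> (tr_Fp p n (0 * u i)) = 1" using tr_0[OF charp pp] psi0[OF psi ppos] by simp
      finally have "(\<Sum>a\<in>D i. \<psi> (tr_Fp p n (a * u i))) = (if u i = 0 then of_nat (card Fq) else 0) - 1"
        using cs by simp
      moreover have "card (D i) = card Fq - 1" using True z by (simp add: D_def)
      moreover have "card Fq \<ge> 1" using z by (metis One_nat_def Suc_leI card_gt_0_iff empty_iff finite)
      ultimately show ?thesis using True by (auto simp: of_nat_diff)
    qed
  qed
  have Dpos: "card (D i) > 0" for i
  proof -
    have "1 \<in> D i" using one by (simp add: D_def)
    then show ?thesis by (metis card_gt_0_iff empty_iff finite)
  qed
  show ?thesis
  proof (cases "cnd p (p^n) r s \<alpha> \<beta> g h \<epsilon>")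
    case True
    then have u0: "u i = 0" for i
      using key_both[OF charp pp npos eps rpos spos rsd aF a0 bF b0 mpg mph] by (simp add: u_def)
    have "(\<Prod>i\<in>I. \<Sum>a\<in>D i. \<psi> (tr_Fp p n (a * u i))) = (\<Prod>i\<in>I. of_nat (card (D i)))"
    proof (rule prod.cong[OF refl])
      fix i assume i: "i \<in> I"
      show "(\<Sum>a\<in>D i. \<psi> (tr_Fp p n (a * u i))) = of_nat (card (D i))"
        by (subst Fact[OF i]) (simp add: u0)
    qed
    also have "\<dots> = of_nat (card (Fam p (p^n) d :: 'a poly set))" unfolding C by simp
    finally have P: "(\<Prod>i\<in>I. \<Sum>a\<in>D i. \<psi> (tr_Fp p n (a * u i))) = of_nat (card (Fam p (p^n) d :: 'a poly set))" .
    have cpos: "card (Fam p (p^n) d :: 'a poly set) > 0" unfolding C by (rule prod_pos) (use Dpos in auto)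
    show ?thesis unfolding S P using True cpos by simp
  next
    case False
    have "\<not> (\<forall>i. 1 \<le> i \<and> i < d \<longrightarrow> u i = 0)"
      using key_both[OF charp pp npos eps rpos spos rsd aF a0 bF b0 mpg mph] False by (auto simp: u_def)
    then have "\<not> (\<forall>i. 1 \<le> i \<and> i < d \<and> \<not> p dvd i \<longrightarrow> u i = 0)"
      using uu_prop[OF charp pp eps, of d "p^n" r s \<alpha> \<beta>] unfolding u_def by blast
    then obtain i0 where i0: "1 \<le> i0" "i0 < d" "\<not> p dvd i0" "u i0 \<noteq> 0" by blast
    have "i0 \<in> I" "i0 \<noteq> d" using i0 by (auto simp: I_def)
    then have "(\<Prod>i\<in>I. \<Sum>a\<in>D i. \<psi> (tr_Fp p n (a * u i))) = 0"
      using Fact i0(4) finI by (intro prod_zero) auto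
    then show ?thesis unfolding S using False by simp
  qed
qed

theorem lemma7:
  fixes p n N d r s :: nat
    and \<psi> :: "'a::{field,finite} \<Rightarrow> complex"
    and \<alpha> \<beta> :: 'a and g h :: "'a poly"
  defines "q \<equiv> p ^ n"
  assumes "prime p" and "p > 2" and "n > 0"
    and "card (UNIV :: 'a set) = p ^ N" and "n * r dvd N" and "n * s dvd N"
    and "coprime d p"
    and "nontriv_add_char p \<psi>"
    and "r > 0" and "s > 0" and "r + s < d"
    and "\<alpha> \<in> ffield_set (q ^ r)" and "\<alpha> \<noteq> 0"
    and "\<beta> \<in> ffield_set (q ^ s)" and "\<beta> \<noteq> 0"
    and "is_min_poly (ffield_set q) \<alpha> g" and "is_min_poly (ffield_set q) \<beta> h"
  shows "(\<Sum>f\<in>Fam p q d. \<psi> (tr_Fp p (n * r) (poly f \<alpha>) - tr_Fp p (n * s) (poly f \<beta>)))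
           / of_nat (card (Fam p q d :: 'a poly set))
         = (if (g = h \<and> int (p * degree g) dvd int r - int s)
               \<or> (\<alpha> \<in> A_set p q r \<and> \<beta> \<in> A_set p q s) then 1 else 0) \<and>
         (\<Sum>f\<in>Fam p q d. \<psi> (tr_Fp p (n * r) (poly f \<alpha>) + tr_Fp p (n * s) (poly f \<beta>)))
           / of_nat (card (Fam p q d :: 'a poly set))
         = (if (g = h \<and> p * degree g dvd r + s)
               \<or> (\<alpha> \<in> A_set p q r \<and> \<beta> \<in> A_set p q s) then 1 else 0)"
proof -
  note M = main_eps[OF assms(2-6) assms(8-18)[unfolded q_def]]
  have A: "(\<Sum>f\<in>Fam p (p^n) d. \<psi> (tr_Fp p (n * r) (poly f \<alpha>) + of_int (-1) * tr_Fp p (n * s) (poly f \<beta>)))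
           / of_nat (card (Fam p (p^n) d :: 'a poly set))
         = (if cnd p (p^n) r s \<alpha> \<beta> g h (-1) then 1 else 0)" by (rule M) simp
  have B: "(\<Sum>f\<in>Fam p (p^n) d. \<psi> (tr_Fp p (n * r) (poly f \<alpha>) + of_int 1 * tr_Fp p (n * s) (poly f \<beta>)))
           / of_nat (card (Fam p (p^n) d :: 'a poly set))
         = (if cnd p (p^n) r s \<alpha> \<beta> g h 1 then 1 else 0)" by (rule M) simp
  have c1: "cnd p (p^n) r s \<alpha> \<beta> g h (-1) \<longleftrightarrow> ((g = h \<and> int (p * degree g) dvd int r - int s)
               \<or> (\<alpha> \<in> A_set p q r \<and> \<beta> \<in> A_set p q s))"
    unfolding cnd_def q_def by simp
  have e2: "(int (p * degree g) dvd int r + 1 * int s) \<longleftrightarrow> (p * degree g dvd r + s)"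
    by (metis mult_1 of_nat_add of_nat_dvd_iff)
  have c2: "cnd p (p^n) r s \<alpha> \<beta> g h 1 \<longleftrightarrow> ((g = h \<and> p * degree g dvd r + s)
               \<or> (\<alpha> \<in> A_set p q r \<and> \<beta> \<in> A_set p q s))"
    unfolding cnd_def q_def e2 ..
  have s1: "(\<Sum>f\<in>Fam p (p^n) d. \<psi> (tr_Fp p (n * r) (poly f \<alpha>) + of_int (-1) * tr_Fp p (n * s) (poly f \<beta>)))
     = (\<Sum>f\<in>Fam p (p^n) d. \<psi> (tr_Fp p (n * r) (poly f \<alpha>) - tr_Fp p (n * s) (poly f \<beta>)))"
    by simp
  have s2: "(\<Sum>f\<in>Fam p (p^n) d. \<psi> (tr_Fp p (n * r) (poly f \<alpha>) + of_int 1 * tr_Fp p (n * s) (poly f \<beta>)))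
     = (\<Sum>f\<in>Fam p (p^n) d. \<psi> (tr_Fp p (n * r) (poly f \<alpha>) + tr_Fp p (n * s) (poly f \<beta>)))"
    by simp
  show ?thesis using A B unfolding s1 s2 c1 c2 q_def by simp
qed

end
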